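(* Let $f$ be a bounded modulus function, $\beta\in(0,1]$, $m\ge0$ an integer, $\theta=(k_r)$ a lacunary sequence, and $p=(p_k)$ a sequence of positive reals with $0<h=\inf_kp_k\le p_k\le\sup_kp_k=H<\infty$. If $\lim_{r\to\infty}\frac{h_r}{h_r^\beta}=1$, then $S_\theta^\beta(F,\Delta^m)\subset w_p^\beta(\theta,f,F,\Delta^m)$.
   Context: A fuzzy number is a map $X:\mathbb{R}\to[0,1]$ which is normal, fuzzy convex, upper semicontinuous, with compact closure of $\{t:X(t)>0\}$; $L(\mathbb{R})$ is the set of fuzzy numbers. Level sets $[X]^\alpha=\{t:X(t)\ge\alpha\}$ ($\alpha\in(0,1]$), $[X]^0=\overline{\{t:X(t)>0\}}$, are compact intervals $[u^\alpha,v^\alpha]$. Subtraction: $[X-Y]^\alpha=[u_1^\alpha-v_2^\alpha,v_1^\alpha-u_2^\alpha]$. Metric: $d(X,Y)=\sup_{\alpha\in[0,1]}\max\{|u_1^\alpha-u_2^\alpha|,|v_1^\alpha-v_2^\alpha|\}$. $(\Delta^0X)_k=X_k$, $(\Delta^1X)_k=X_k-X_{k+1}$, $(\Delta^mX)_k=(\Delta^1(\Delta^{m-1}X))_k$. A lacunary sequence is an increasing integer sequence $\theta=(k_r)_{r\ge0}$ with $k_0=0$, $h_r=k_r-k_{r-1}\to\infty$; $I_r=(k_{r-1},k_r]$. A modulus function is $f:[0,\infty)\to[0,\infty)$ with $f(x)=0$ iff $x=0$, $f(x+y)\le f(x)+f(y)$, $f$ increasing, and $f$ right-continuous at $0$.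 $w_p^\beta(\theta,f,F,\Delta^m)$: sequences $X$ of fuzzy numbers with some $X_0\in L(\mathbb{R})$ such that $\lim_r\frac{1}{h_r^\beta}\sum_{k\in I_r}[f(d(\Delta^mX_k,X_0))]^{p_k}=0$. $S_\theta^\beta(F,\Delta^m)$: sequences $X$ with some $X_0\in L(\mathbb{R})$ such that for all $\varepsilon>0$, $\lim_r\frac{1}{h_r^\beta}|\{k\in I_r:d(\Delta^mX_k,X_0)\ge\varepsilon\}|=0$. *)

theory Defs
  imports "HOL-Analysis.Analysis"
begin

type_synonym fuzzy = "real \<Rightarrow> real"

definition fuzzy_number :: "fuzzy \<Rightarrow> bool" where
  "fuzzy_number X \<longleftrightarrow>
     (\<forall>t. 0 \<le> X t \<and> X t \<le> 1) \<and>
     (\<exists>t. X t = 1) \<and>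
     (\<forall>s t l. 0 \<le> l \<and> l \<le> 1 \<longrightarrow> min (X s) (X t) \<le> X (l * s + (1 - l) * t)) \<and>
     (\<forall>t a. X t < a \<longrightarrow> (\<forall>\<^sub>F s in at t. X s < a)) \<and>
     compact (closure {t. X t > 0})"

definition level :: "fuzzy \<Rightarrow> real \<Rightarrow> real set" where
  "level X \<alpha> = (if \<alpha> = 0 then closure {t. X t > 0} else {t. X t \<ge> \<alpha>})"

definition lev_lo :: "fuzzy \<Rightarrow> real \<Rightarrow> real" where
  "lev_lo X \<alpha> = Inf (level X \<alpha>)"

definition lev_hi :: "fuzzy \<Rightarrow> real \<Rightarrow> real" where
  "lev_hi X \<alpha> = Sup (level X \<alpha>)"

text \<open>Subtraction of fuzzy numbers, defined through its level sets
  [X - Y]^a = [u1^a - v2^a, v1^a - u2^a] for a in (0,1].\<close>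
definition fsub :: "fuzzy \<Rightarrow> fuzzy \<Rightarrow> fuzzy" where
  "fsub X Y t = Sup ({0} \<union> {\<alpha>. 0 < \<alpha> \<and> \<alpha> \<le> 1 \<and>
       lev_lo X \<alpha> - lev_hi Y \<alpha> \<le> t \<and> t \<le> lev_hi X \<alpha> - lev_lo Y \<alpha>})"

definition fdist :: "fuzzy \<Rightarrow> fuzzy \<Rightarrow> real" where
  "fdist X Y = (SUP \<alpha>\<in>{0..1}. max \<bar>lev_lo X \<alpha> - lev_lo Y \<alpha>\<bar> \<bar>lev_hi X \<alpha> - lev_hi Y \<alpha>\<bar>)"

fun fdelta :: "nat \<Rightarrow> (nat \<Rightarrow> fuzzy) \<Rightarrow> nat \<Rightarrow> fuzzy" where
  "fdelta 0 X k = X k"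
| "fdelta (Suc m) X k = fsub (fdelta m X k) (fdelta m X (Suc k))"

definition lacunary :: "(nat \<Rightarrow> nat) \<Rightarrow> bool" where
  "lacunary \<theta> \<longleftrightarrow> \<theta> 0 = 0 \<and> strict_mono \<theta> \<and>
     filterlim (\<lambda>r. real (\<theta> (Suc r) - \<theta> r)) at_top sequentially"

definition lac_h :: "(nat \<Rightarrow> nat) \<Rightarrow> nat \<Rightarrow> nat" where
  "lac_h \<theta> r = \<theta> r - \<theta> (r - 1)"

definition lac_I :: "(nat \<Rightarrow> nat) \<Rightarrow> nat \<Rightarrow> nat set" where
  "lac_I \<theta> r = {\<theta> (r - 1)<..\<theta> r}"

definition modulus :: "(real \<Rightarrow> real) \<Rightarrow> bool" where
  "modulus f \<longleftrightarrow>
     (\<forall>x\<ge>0. f x \<ge> 0) \<and>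
     (\<forall>x\<ge>0. f x = 0 \<longleftrightarrow> x = 0) \<and>
     (\<forall>x\<ge>0. \<forall>y\<ge>0. f (x + y) \<le> f x + f y) \<and>
     mono_on {0..} f \<and>
     (f \<longlongrightarrow> 0) (at_right 0)"

definition fuzzy_seq :: "(nat \<Rightarrow> fuzzy) \<Rightarrow> bool" where
  "fuzzy_seq X \<longleftrightarrow> (\<forall>k. fuzzy_number (X k))"

definition w_space :: "real \<Rightarrow> (nat \<Rightarrow> real) \<Rightarrow> (nat \<Rightarrow> nat) \<Rightarrow> (real \<Rightarrow> real) \<Rightarrow> nat
    \<Rightarrow> (nat \<Rightarrow> fuzzy) set" where
  "w_space \<beta> p \<theta> f m = {X. fuzzy_seq X \<and> (\<exists>X0. fuzzy_number X0 \<and>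
     (\<lambda>r. (1 / real (lac_h \<theta> r) powr \<beta>) *
        (\<Sum>k\<in>lac_I \<theta> r. f (fdist (fdelta m X k) X0) powr p k)) \<longlonglongrightarrow> 0)}"

definition S_space :: "real \<Rightarrow> (nat \<Rightarrow> nat) \<Rightarrow> nat \<Rightarrow> (nat \<Rightarrow> fuzzy) set" where
  "S_space \<beta> \<theta> m = {X. fuzzy_seq X \<and> (\<exists>X0. fuzzy_number X0 \<and>
     (\<forall>\<epsilon>>0. (\<lambda>r. real (card {k\<in>lac_I \<theta> r. fdist (fdelta m X k) X0 \<ge> \<epsilon>})
                   / real (lac_h \<theta> r) powr \<beta>) \<longlonglongrightarrow> 0))}"

end

theory Submission
  imports Defs
begin

definition bnd :: "fuzzy \<Rightarrow> bool" where
  "bnd Z \<longleftrightarrow> (\<exists>C. \<forall>\<alpha>\<in>{0..1}. level Z \<alpha> \<subseteq> {-C..C})"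

lemma inf_bnd:
  fixes S :: "real set"
  assumes "S \<subseteq> {-B..B}"
  shows "\<bar>Inf S\<bar> \<le> max \<bar>Inf ({}::real set)\<bar> B"
proof (cases "S = {}")
  case True then show ?thesis by simp
next
  case False
  then obtain x where x: "x \<in> S" by blast
  have bb: "bdd_below S" using assms by (auto intro!: bdd_belowI[where m="-B"])
  have "Inf S \<ge> -B" using False assms by (auto intro!: cInf_greatest)
  moreover have "Inf S \<le> B" using cInf_lower[OF x bb] x assms by auto
  ultimately show ?thesis by auto
qed

lemma sup_bnd:
  fixes S :: "real set"
  assumes "S \<subseteq> {-B..B}"
  shows "\<bar>Sup S\<bar> \<le> max \<bar>Sup ({}::real set)\<bar> B"
proof (cases "S = {}")
  case True then show ?thesis by simp
next
  case False
  then obtain x where x: "x \<in> S" by blast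
  have bb: "bdd_above S" using assms by (auto intro!: bdd_aboveI[where M="B"])
  have "Sup S \<le> B" using False assms by (auto intro!: cSup_least)
  moreover have "Sup S \<ge> -B" using cSup_upper[OF x bb] x assms by auto
  ultimately show ?thesis by auto
qed

lemma bnd_lev:
  assumes "bnd Z"
  shows "\<exists>C. \<forall>\<alpha>\<in>{0..1}. \<bar>lev_lo Z \<alpha>\<bar> \<le> C \<and> \<bar>lev_hi Z \<alpha>\<bar> \<le> C"
proof -
  obtain B where B: "\<forall>\<alpha>\<in>{0..1}. level Z \<alpha> \<subseteq> {-B..B}" using assms bnd_def by blast
  define C where "C = max (max \<bar>Inf ({}::real set)\<bar> \<bar>Sup ({}::real set)\<bar>) B"
  have "\<bar>lev_lo Z \<alpha>\<bar> \<le> C \<and> \<bar>lev_hi Z \<alpha>\<bar> \<le> C" if a: "\<alpha> \<in> {0..1}" for \<alpha>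
  proof -
    have L: "level Z \<alpha> \<subseteq> {-B..B}" using B a by blast
    have c1: "max \<bar>Inf ({}::real set)\<bar> B \<le> C" unfolding C_def by (auto simp: max_def)
    have c2: "max \<bar>Sup ({}::real set)\<bar> B \<le> C" unfolding C_def by (auto simp: max_def)
    have "\<bar>Inf (level Z \<alpha>)\<bar> \<le> C" using order_trans[OF inf_bnd[OF L] c1] .
    moreover have "\<bar>Sup (level Z \<alpha>)\<bar> \<le> C" using order_trans[OF sup_bnd[OF L] c2] .
    ultimately show ?thesis unfolding lev_lo_def lev_hi_def by blast
  qed
  then show ?thesis by blast
qed

lemma fuzzy_bnd:
  assumes "fuzzy_number X"
  shows "bnd X"
proof -
  have "compact (closure {t. X t > 0})" using assms fuzzy_number_def by blast
  then have "bounded (closure {t. X t > 0})" by (rule compact_imp_bounded)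
  then obtain a where a: "\<forall>x\<in>closure {t. X t > 0}. norm x \<le> a" using bounded_iff by blast
  have "\<forall>\<alpha>\<in>{0..1}. level X \<alpha> \<subseteq> closure {t. X t > 0}"
  proof
    fix \<alpha> :: real assume "\<alpha> \<in> {0..1}"
    show "level X \<alpha> \<subseteq> closure {t. X t > 0}"
    proof (cases "\<alpha> = 0")
      case True then show ?thesis by (simp add: level_def)
    next
      case False
      then have "\<alpha> > 0" using \<open>\<alpha> \<in> {0..1}\<close> by auto
      then have "level X \<alpha> \<subseteq> {t. X t > 0}" by (auto simp: level_def)
      then show ?thesis using closure_subset by blast
    qed
  qed
  then have "\<forall>\<alpha>\<in>{0..1}. level X \<alpha> \<subseteq> {-a..a}" using a by fastforce
  then show ?thesis unfolding bnd_def by blast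
qed

lemma fsub_pos:
  assumes "fsub X Y t > 0"
  shows "\<exists>\<alpha>. lev_lo X \<alpha> - lev_hi Y \<alpha> \<le> t \<and> t \<le> lev_hi X \<alpha> - lev_lo Y \<alpha> \<and> 0 < \<alpha> \<and> \<alpha> \<le> 1"
proof (rule ccontr)
  assume "\<not> ?thesis"
  then have E: "{\<alpha>. 0 < \<alpha> \<and> \<alpha> \<le> 1 \<and>
       lev_lo X \<alpha> - lev_hi Y \<alpha> \<le> t \<and> t \<le> lev_hi X \<alpha> - lev_lo Y \<alpha>} = {}" by auto
  have "fsub X Y t = 0" unfolding fsub_def E by simp
  then show False using assms by simp
qed

lemma fsub_bnd:
  assumes "bnd X" "bnd Y"
  shows "bnd (fsub X Y)"
proof -
  obtain C1 where C1: "\<forall>\<alpha>\<in>{0..1}. \<bar>lev_lo X \<alpha>\<bar> \<le> C1 \<and> \<bar>lev_hi X \<alpha>\<bar> \<le> C1"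
    using bnd_lev[OF assms(1)] by blast
  obtain C2 where C2: "\<forall>\<alpha>\<in>{0..1}. \<bar>lev_lo Y \<alpha>\<bar> \<le> C2 \<and> \<bar>lev_hi Y \<alpha>\<bar> \<le> C2"
    using bnd_lev[OF assms(2)] by blast
  have P: "{t. fsub X Y t > 0} \<subseteq> {-(C1+C2)..C1+C2}"
  proof
    fix t assume "t \<in> {t. fsub X Y t > 0}"
    then obtain \<alpha> where al: "lev_lo X \<alpha> - lev_hi Y \<alpha> \<le> t" "t \<le> lev_hi X \<alpha> - lev_lo Y \<alpha>" "0 < \<alpha>" "\<alpha> \<le> 1"
      using fsub_pos by blast
    then have "\<alpha> \<in> {0..1}" by auto
    then show "t \<in> {-(C1+C2)..C1+C2}" using C1 C2 al by fastforce
  qed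
  have "\<forall>\<alpha>\<in>{0..1}. level (fsub X Y) \<alpha> \<subseteq> {-(C1+C2)..C1+C2}"
  proof
    fix \<alpha> :: real assume "\<alpha> \<in> {0..1}"
    show "level (fsub X Y) \<alpha> \<subseteq> {-(C1+C2)..C1+C2}"
    proof (cases "\<alpha> = 0")
      case True
      have "closure {t. fsub X Y t > 0} \<subseteq> closure {-(C1+C2)..C1+C2}" using P closure_mono by blast
      then show ?thesis using True by (simp add: level_def)
    next
      case False
      then have "\<alpha> > 0" using \<open>\<alpha> \<in> {0..1}\<close> by auto
      then have "level (fsub X Y) \<alpha> \<subseteq> {t. fsub X Y t > 0}" by (auto simp: level_def)
      then show ?thesis using P by blast
    qed
  qed
  then show ?thesis unfolding bnd_def by blast
qed

lemma fdelta_bnd: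
  assumes "fuzzy_seq X"
  shows "bnd (fdelta m X k)"
  using assms
  by (induction m arbitrary: k) (auto simp: fuzzy_seq_def fuzzy_bnd fsub_bnd)

lemma fdist_nonneg:
  assumes "bnd Z" "bnd W"
  shows "fdist Z W \<ge> 0"
proof -
  obtain C1 where C1: "\<forall>\<alpha>\<in>{0..1}. \<bar>lev_lo Z \<alpha>\<bar> \<le> C1 \<and> \<bar>lev_hi Z \<alpha>\<bar> \<le> C1"
    using bnd_lev[OF assms(1)] by blast
  obtain C2 where C2: "\<forall>\<alpha>\<in>{0..1}. \<bar>lev_lo W \<alpha>\<bar> \<le> C2 \<and> \<bar>lev_hi W \<alpha>\<bar> \<le> C2"
    using bnd_lev[OF assms(2)] by blast
  have "bdd_above ((\<lambda>\<alpha>. max \<bar>lev_lo Z \<alpha> - lev_lo W \<alpha>\<bar> \<bar>lev_hi Z \<alpha> - lev_hi W \<alpha>\<bar>) ` {0..1})"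
  proof (rule bdd_aboveI[where M="C1+C2"])
    fix x assume "x \<in> (\<lambda>\<alpha>. max \<bar>lev_lo Z \<alpha> - lev_lo W \<alpha>\<bar> \<bar>lev_hi Z \<alpha> - lev_hi W \<alpha>\<bar>) ` {0..1}"
    then obtain \<alpha> where "\<alpha> \<in> {0..1}" "x = max \<bar>lev_lo Z \<alpha> - lev_lo W \<alpha>\<bar> \<bar>lev_hi Z \<alpha> - lev_hi W \<alpha>\<bar>" by blast
    then show "x \<le> C1 + C2" using C1 C2 by fastforce
  qed
  then show ?thesis unfolding fdist_def
    by (rule cSUP_upper2[where x=0]) auto
qed


theorem theorem3p3:
  fixes f :: "real \<Rightarrow> real" and \<beta> :: real and m :: nat
    and \<theta> :: "nat \<Rightarrow> nat" and p :: "nat \<Rightarrow> real"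
  assumes "modulus f" and "\<exists>M. \<forall>x\<ge>0. f x \<le> M"
    and "0 < \<beta>" and "\<beta> \<le> 1"
    and "lacunary \<theta>"
    and "\<forall>k. 0 < p k" and "0 < Inf (range p)" and "bdd_above (range p)"
    and "(\<lambda>r. real (lac_h \<theta> r) / real (lac_h \<theta> r) powr \<beta>) \<longlonglongrightarrow> 1"
  shows "S_space \<beta> \<theta> m \<subseteq> w_space \<beta> p \<theta> f m"
proof
  fix X assume "X \<in> S_space \<beta> \<theta> m"
  then obtain X0 where fs: "fuzzy_seq X" and X0: "fuzzy_number X0"
    and cnt: "\<And>\<epsilon>. \<epsilon> > 0 \<Longrightarrow> (\<lambda>r. real (card {k\<in>lac_I \<theta> r. fdist (fdelta m X k) X0 \<ge> \<epsilon>})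
                   / real (lac_h \<theta> r) powr \<beta>) \<longlonglongrightarrow> 0"
    unfolding S_space_def by blast
  define d where "d k = fdist (fdelta m X k) X0" for k
  have d0: "d k \<ge> 0" for k unfolding d_def
    by (rule fdist_nonneg[OF fdelta_bnd[OF fs] fuzzy_bnd[OF X0]])
  have fpos: "\<And>x. x \<ge> 0 \<Longrightarrow> f x \<ge> 0" using assms(1) modulus_def by blast
  have fmono: "mono_on {0..} f" using assms(1) modulus_def by blast
  have flim: "(f \<longlongrightarrow> 0) (at_right 0)" using assms(1) modulus_def by blast
  obtain M where M: "\<forall>x\<ge>0. f x \<le> M" using assms(2) by blast
  define M0 where "M0 = max 1 M"
  define H where "H = Sup (range p)"
  define hh where "hh = Inf (range p)"
  have pH: "p k \<le> H" for k unfolding H_def using assms(8) by (auto intro: cSup_upper)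
  have ph: "hh \<le> p k" for k unfolding hh_def
    by (rule cInf_lower) (use assms(6) in \<open>auto intro!: bdd_belowI[where m=0] less_imp_le\<close>)
  have hh0: "hh > 0" using assms(7) hh_def by simp
  define K where "K = M0 powr H"
  define g where "g k = f (d k) powr p k" for k
  have g0: "g k \<ge> 0" for k unfolding g_def by simp
  have gK: "g k \<le> K" for k
  proof -
    have "f (d k) \<le> M0" using M d0[of k] M0_def by force
    then have "g k \<le> M0 powr p k" unfolding g_def
      by (intro powr_mono2) (use assms(6) fpos d0 in \<open>auto intro: less_imp_le\<close>)
    also have "\<dots> \<le> K" unfolding K_def by (intro powr_mono pH) (simp add: M0_def)
    finally show ?thesis .
  qed
  have K0: "K \<ge> 0" unfolding K_def by simp
  have fin: "finite (lac_I \<theta> r)" for r by (simp add: lac_I_def)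
  have cardI: "card (lac_I \<theta> r) = lac_h \<theta> r" for r by (simp add: lac_I_def lac_h_def)
  define Q where "Q r = (1 / real (lac_h \<theta> r) powr \<beta>) * (\<Sum>k\<in>lac_I \<theta> r. g k)" for r
  have Q0: "Q r \<ge> 0" for r unfolding Q_def by (intro mult_nonneg_nonneg sum_nonneg g0) auto
  have "Q \<longlonglongrightarrow> 0"
  proof (rule order_tendstoI)
    fix a :: real assume "a < 0" then show "\<forall>\<^sub>F r in sequentially. a < Q r"
    proof -
      have "a < Q r" for r using Q0[of r] \<open>a < 0\<close> by linarith
      then show ?thesis by simp
    qed
  next
    fix e :: real assume e: "0 < e"
    define \<eta> where "\<eta> = min (1/2) ((e/8) powr (1/hh))"
    have \<eta>0: "\<eta> > 0" unfolding \<eta>_def using e by simp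
    have \<eta>1: "\<eta> < 1" unfolding \<eta>_def by simp
    have "\<eta> powr hh \<le> ((e/8) powr (1/hh)) powr hh"
      by (rule powr_mono2) (use hh0 \<eta>0 in \<open>auto simp: \<eta>_def\<close>)
    also have "\<dots> = e/8" using hh0 e by (simp add: powr_powr)
    finally have \<eta>e: "\<eta> powr hh \<le> e/8" .
    have "\<forall>\<^sub>F x in at_right 0. f x < \<eta>" using order_tendstoD(2)[OF flim \<eta>0] .
    then obtain b where b: "b > 0" "\<And>y. y > 0 \<Longrightarrow> y < b \<Longrightarrow> f y < \<eta>"
      unfolding eventually_at_right_field by auto
    define \<delta> where "\<delta> = b/2"
    have \<delta>0: "\<delta> > 0" using b by (simp add: \<delta>_def)
    define A where "A = f \<delta>"
    have A0: "A \<ge> 0" unfolding A_def using fpos \<delta>0 by simp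
    have A\<eta>: "A < \<eta>" unfolding A_def using b \<delta>0 by (simp add: \<delta>_def)
    have AA: "A powr hh \<le> e/8"
      using powr_mono2[of hh A \<eta>] hh0 A0 A\<eta> \<eta>e by simp
    have gb: "g k \<le> (if \<delta> \<le> d k then K else 0) + A powr hh" for k
    proof (cases "\<delta> \<le> d k")
      case True
      have "0 \<le> A powr hh" by simp
      then have "g k \<le> K + A powr hh" using gK[of k] by linarith
      then show ?thesis using True by simp
    next
      case False
      then have "f (d k) \<le> A" unfolding A_def using d0[of k] \<delta>0
        by (intro mono_onD[OF fmono]) auto
      then have "g k \<le> A powr p k" unfolding g_def
        by (intro powr_mono2) (use assms(6) fpos d0 in \<open>auto intro: less_imp_le\<close>)
      also have "\<dots> \<le> A powr hh" by (rule powr_mono') (use ph A0 A\<eta> \<eta>1 in auto)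
      finally show ?thesis using False by simp
    qed
    have sb: "(\<Sum>k\<in>lac_I \<theta> r. g k) \<le> K * real (card {k\<in>lac_I \<theta> r. \<delta> \<le> d k}) + real (lac_h \<theta> r) * A powr hh" for r
    proof -
      have "(\<Sum>k\<in>lac_I \<theta> r. g k) \<le> (\<Sum>k\<in>lac_I \<theta> r. (if \<delta> \<le> d k then K else 0) + A powr hh)"
        by (rule sum_mono) (rule gb)
      also have "\<dots> = (\<Sum>k\<in>lac_I \<theta> r. (if \<delta> \<le> d k then K else 0)) + real (lac_h \<theta> r) * A powr hh"
        by (simp add: sum.distrib cardI)
      also have "(\<Sum>k\<in>lac_I \<theta> r. (if \<delta> \<le> d k then K else 0)) = K * real (card {k\<in>lac_I \<theta> r. \<delta> \<le> d k})"
        by (simp add: sum.inter_filter[OF fin, symmetric])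
      finally show ?thesis .
    qed
    have ev1: "\<forall>\<^sub>F r in sequentially. K * (real (card {k\<in>lac_I \<theta> r. \<delta> \<le> d k}) / real (lac_h \<theta> r) powr \<beta>) < e/2"
    proof -
      have "(\<lambda>r. K * (real (card {k\<in>lac_I \<theta> r. \<delta> \<le> d k}) / real (lac_h \<theta> r) powr \<beta>)) \<longlonglongrightarrow> K * 0"
        by (intro tendsto_mult tendsto_const) (use cnt[OF \<delta>0] in \<open>simp add: d_def\<close>)
      then show ?thesis using e by (intro order_tendstoD(2)) auto
    qed
    have ev2: "\<forall>\<^sub>F r in sequentially. real (lac_h \<theta> r) / real (lac_h \<theta> r) powr \<beta> < 2"
      using order_tendstoD(2)[OF assms(9)] by simp
    show "\<forall>\<^sub>F r in sequentially. Q r < e"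
      using ev1 ev2
    proof eventually_elim
      case (elim r)
      define hb where "hb = real (lac_h \<theta> r) powr \<beta>"
      define c where "c = real (card {k\<in>lac_I \<theta> r. \<delta> \<le> d k})"
      have hb0: "hb \<ge> 0" by (simp add: hb_def)
      have "Q r = (\<Sum>k\<in>lac_I \<theta> r. g k) / hb" by (simp add: Q_def hb_def)
      also have "\<dots> \<le> (K * c + real (lac_h \<theta> r) * A powr hh) / hb"
        unfolding c_def using sb[of r] hb0 by (rule divide_right_mono)
      also have "\<dots> = K * (c / hb) + (real (lac_h \<theta> r) / hb) * A powr hh"
        by (simp add: add_divide_distrib)
      also have "\<dots> < e/2 + 2 * (e/8)"
      proof (rule add_less_le_mono)
        show "K * (c / hb) < e/2" using elim(1) by (simp add: c_def hb_def)
        have "real (lac_h \<theta> r) / hb \<le> 2" using elim(2) by (simp add: hb_def)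
        moreover have "real (lac_h \<theta> r) / hb \<ge> 0" using hb0 by simp
        ultimately show "(real (lac_h \<theta> r) / hb) * A powr hh \<le> 2 * (e/8)"
          using AA by (intro mult_mono) auto
      qed
      also have "\<dots> < e" using e by simp
      finally show ?case .
    qed
  qed
  moreover have "Q = (\<lambda>r. (1 / real (lac_h \<theta> r) powr \<beta>) *
        (\<Sum>k\<in>lac_I \<theta> r. f (fdist (fdelta m X k) X0) powr p k))"
    by (rule ext) (simp add: Q_def g_def d_def)
  ultimately show "X \<in> w_space \<beta> p \<theta> f m"
    unfolding w_space_def using fs X0 by auto
qed

end
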